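(* Consider the approximate first-stage problem described in the context, with $\theta\in\Theta$. If this problem remains feasible when $z$ is fixed to some integer-valued $z^\star$, then the resulting fixed problem (optimization over $b$ and $y$ only) has an integer-valued optimal solution $(b^\star,y^\star)$, even when the integrality constraints on $y$ and $b$ are relaxed.
   Context: Data: a directed graph $\mathcal{G}_\text{RV}=(\mathcal{N}_\text{RV},\mathcal{E}_\text{RV})$ of one-step rebalancing-vehicle (RV) movements, a set $\mathcal{N}_\text{SV}$ of stations, a finite set $\mathcal{V}$ of RVs each with integer capacity $\overline{b}$, horizon $T$, integer bound $\overline{y}$, costs $c_{i,j}^t\in\mathbb{R}$, $r_i^t\ge0$. A parameter vector $\theta=(\theta_0,(\theta_i^t)_{i,t})$ with $\theta_0\in\mathbb{R}$ and $\theta_i^t=([\theta_i^t]_{-\overline{y}},\dots,[\theta_i^t]_{\overline{y}-1})\in\mathbb{R}^{2\overline{y}}$ defines $\overline{V}_i^t(\cdot;\theta_i^t):[-\overline{y},\overline{y}]\to\mathbb{R}$ as the continuous piecewise linear function with $\overline{V}_i^t(0)=0$ whose slope on $[m,m+1]$ is $[\theta_i^t]_m$ for $m=-\overline{y},\dots,\overline{y}-1$, and $\overline{V}(y;\theta)=\theta_0+\sum_{t=1}^T\sum_{i\in\mathcal{N}_\text{SV}\cap\mathcal{N}_\text{RV}}\overline{V}_i^t(y_i^{-,t}-y_i^{+,t};\theta_i^t)$. The admissible parameter set is $\Theta=\{\theta: -\theta^{\max}\le[\theta_i^t]_{m}\le\theta^{\max}\ \forall m,i,t;\ [\theta_i^t]_m\ge[\theta_i^t]_{m-1}\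 \text{for } m=-\overline{y}+1,\dots,\overline{y}-1,\ \forall i,t\}$ for a constant $\theta^{\max}>0$ (so each $\overline{V}_i^t$ is convex). The approximate first-stage problem is $$\min_{z,y,b}\ \sum_{t=1}^T\Big[\sum_{(i,j)\in\mathcal{E}_\text{RV}}c_{i,j}^tz_{i,j}^t+\sum_{i\in\mathcal{N}_\text{SV}\cap\mathcal{N}_\text{RV}}r_i^t(y_i^{+,t}+y_i^{-,t})\Big]+\overline{V}(y;\theta)$$ subject to: $\sum_{(i,j)\in\mathcal{E}_\text{RV}}b_{i,j}^t=\sum_{(j,i)\in\mathcal{E}_\text{RV}}b_{j,i}^{t-1}+y_i^{+,t}-y_i^{-,t}$ and $\sum_{(i,j)\in\mathcal{E}_\text{RV}}z_{i,j}^t=\sum_{(j,i)\in\mathcal{E}_\text{RV}}z_{j,i}^{t-1}$ for $t=1,\dots,T$, $i\in\mathcal{N}_\text{RV}$; $0\le b_{i,j}^t\le\overline{b}z_{i,j}^t$ for $t=0,\dots,T$ with integers $b_{i,j}^0$ given; $0\le y_i^{+,t}\le\overline{y}$, $0\le y_i^{-,t}\le\overline{y}$; integers $z_{i,j}^0$ given with $\sum_{i,j}z_{i,j}^0=|\mathcal{V}|$; $y,b$ integer-valued; $z_{i,j}^t$ integer-valued. (Variables $y_i^{\pm,t}$ are taken to be $0$ where not defined.) *)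

theory Defs
  imports Complex_Main
begin

text \<open>Piecewise linear function on [-ybar, ybar] with value 0 at 0 and slope th m
  on [m, m+1] for m = -ybar, ..., ybar-1 (written out explicitly).\<close>
definition Vpl :: "nat \<Rightarrow> (int \<Rightarrow> real) \<Rightarrow> real \<Rightarrow> real" where
  "Vpl ybar th x =
     (\<Sum>m\<in>{0..<int ybar}. th m * max 0 (min 1 (x - of_int m)))
   - (\<Sum>m\<in>{- int ybar..<0}. th m * max 0 (min 1 (of_int m + 1 - x)))"

text \<open>Admissible parameter set Theta (only the slopes; theta0 is unrestricted).\<close>
definition in_Theta ::
  "'n set \<Rightarrow> 'n set \<Rightarrow> nat \<Rightarrow> nat \<Rightarrow> real \<Rightarrow> (nat \<Rightarrow> 'n \<Rightarrow> int \<Rightarrow> real) \<Rightarrow> bool" where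
  "in_Theta NRV NSV T ybar thmax th \<longleftrightarrow>
     (\<forall>t\<in>{1..T}. \<forall>i\<in>NSV \<inter> NRV.
        (\<forall>m\<in>{- int ybar..<int ybar}. - thmax \<le> th t i m \<and> th t i m \<le> thmax) \<and>
        (\<forall>m\<in>{- int ybar + 1..<int ybar}. th t i m \<ge> th t i (m - 1)))"

definition yval :: "'n set \<Rightarrow> 'n set \<Rightarrow> (nat \<Rightarrow> 'n \<Rightarrow> real) \<Rightarrow> nat \<Rightarrow> 'n \<Rightarrow> real" where
  "yval NRV NSV y t i = (if i \<in> NSV \<inter> NRV then y t i else 0)"

definition fs_constraints ::
  "'n set \<Rightarrow> 'n set \<Rightarrow> ('n \<times> 'n) set \<Rightarrow> nat \<Rightarrow> nat \<Rightarrow> nat \<Rightarrow>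
   ('n \<Rightarrow> 'n \<Rightarrow> real) \<Rightarrow> ('n \<Rightarrow> 'n \<Rightarrow> real) \<Rightarrow>
   (nat \<Rightarrow> 'n \<Rightarrow> 'n \<Rightarrow> real) \<Rightarrow> (nat \<Rightarrow> 'n \<Rightarrow> 'n \<Rightarrow> real) \<Rightarrow>
   (nat \<Rightarrow> 'n \<Rightarrow> real) \<Rightarrow> (nat \<Rightarrow> 'n \<Rightarrow> real) \<Rightarrow> bool" where
  "fs_constraints NRV NSV E T bbar ybar z0 b0 z b yp ym \<longleftrightarrow>
     (\<forall>t\<in>{1..T}. \<forall>i\<in>NRV.
        (\<Sum>(i',j)\<in>{e\<in>E. fst e = i}. b t i' j)
          = (\<Sum>(j,i')\<in>{e\<in>E. snd e = i}. b (t - 1) j i')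
            + yval NRV NSV yp t i - yval NRV NSV ym t i) \<and>
     (\<forall>t\<in>{1..T}. \<forall>i\<in>NRV.
        (\<Sum>(i',j)\<in>{e\<in>E. fst e = i}. z t i' j)
          = (\<Sum>(j,i')\<in>{e\<in>E. snd e = i}. z (t - 1) j i')) \<and>
     (\<forall>t\<in>{0..T}. \<forall>(i,j)\<in>E. 0 \<le> b t i j \<and> b t i j \<le> real bbar * z t i j) \<and>
     (\<forall>(i,j)\<in>E. b 0 i j = b0 i j \<and> z 0 i j = z0 i j) \<and>
     (\<forall>t\<in>{1..T}. \<forall>i\<in>NSV \<inter> NRV.
        0 \<le> yp t i \<and> yp t i \<le> real ybar \<and> 0 \<le> ym t i \<and> ym t i \<le> real ybar)"

definition by_integral ::
  "'n set \<Rightarrow> 'n set \<Rightarrow> ('n \<times> 'n) set \<Rightarrow> nat \<Rightarrow>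
   (nat \<Rightarrow> 'n \<Rightarrow> 'n \<Rightarrow> real) \<Rightarrow> (nat \<Rightarrow> 'n \<Rightarrow> real) \<Rightarrow> (nat \<Rightarrow> 'n \<Rightarrow> real) \<Rightarrow> bool" where
  "by_integral NRV NSV E T b yp ym \<longleftrightarrow>
     (\<forall>t\<in>{0..T}. \<forall>(i,j)\<in>E. b t i j \<in> \<int>) \<and>
     (\<forall>t\<in>{1..T}. \<forall>i\<in>NSV \<inter> NRV. yp t i \<in> \<int> \<and> ym t i \<in> \<int>)"

definition fs_objective ::
  "'n set \<Rightarrow> 'n set \<Rightarrow> ('n \<times> 'n) set \<Rightarrow> nat \<Rightarrow> nat \<Rightarrow>
   (nat \<Rightarrow> 'n \<Rightarrow> 'n \<Rightarrow> real) \<Rightarrow> (nat \<Rightarrow> 'n \<Rightarrow> real) \<Rightarrow>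
   real \<Rightarrow> (nat \<Rightarrow> 'n \<Rightarrow> int \<Rightarrow> real) \<Rightarrow>
   (nat \<Rightarrow> 'n \<Rightarrow> 'n \<Rightarrow> real) \<Rightarrow> (nat \<Rightarrow> 'n \<Rightarrow> real) \<Rightarrow> (nat \<Rightarrow> 'n \<Rightarrow> real) \<Rightarrow> real" where
  "fs_objective NRV NSV E T ybar c r th0 th z yp ym =
     (\<Sum>t\<in>{1..T}. (\<Sum>(i,j)\<in>E. c t i j * z t i j)
                 + (\<Sum>i\<in>NSV \<inter> NRV. r t i * (yp t i + ym t i)))
   + (th0 + (\<Sum>t\<in>{1..T}. \<Sum>i\<in>NSV \<inter> NRV. Vpl ybar (th t i) (ym t i - yp t i)))"

end

theory Submission
  imports Defs "HOL-Library.FuncSet"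
begin


lemma kernel_exists:
  fixes M :: "'r \<Rightarrow> 'e \<Rightarrow> real"
  assumes "finite R" "finite F" "card R < card F"
  shows "\<exists>d. (\<forall>e. e \<notin> F \<longrightarrow> d e = 0) \<and> (\<exists>e\<in>F. d e \<noteq> 0) \<and>
             (\<forall>r\<in>R. (\<Sum>e\<in>F. M r e * d e) = 0)"
  using assms
proof (induction R arbitrary: F M rule: finite_induct)
  case empty
  then obtain e0 where "e0 \<in> F" by fastforce
  then show ?case by (intro exI[of _ "\<lambda>e. if e = e0 then 1 else 0"]) auto
next
  case (insert r R F M)
  show ?case
  proof (cases "\<forall>e\<in>F. M r e = 0")
    case True
    have "card R < card F" using insert by simp
    then obtain d where d: "\<forall>e. e \<notin> F \<longrightarrow> d e = 0" "\<exists>e\<in>F. d e \<noteq> 0"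
       "\<forall>r\<in>R. (\<Sum>e\<in>F. M r e * d e) = 0" using insert.IH[of F M] insert.prems by blast
    show ?thesis using d True by (intro exI[of _ d]) auto
  next
    case False
    then obtain u where u: "u \<in> F" "M r u \<noteq> 0" by blast
    define F' where "F' = F - {u}"
    define M' where "M' = (\<lambda>q e. M q e - M q u * M r e / M r u)"
    have cF': "card R < card F'" using insert u by (simp add: F'_def)
    have fF': "finite F'" using insert by (simp add: F'_def)
    obtain d' where d': "\<forall>e. e \<notin> F' \<longrightarrow> d' e = 0" "\<exists>e\<in>F'. d' e \<noteq> 0"
       "\<forall>q\<in>R. (\<Sum>e\<in>F'. M' q e * d' e) = 0" using insert.IH[OF fF' cF', of M'] by blast
    define S where "S = (\<Sum>e\<in>F'. M r e * d' e)"
    define d where "d = d'(u := - S / M r u)"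
    have sumF: "(\<Sum>e\<in>F. M q e * d e) = M q u * d u + (\<Sum>e\<in>F'. M q e * d' e)" for q
    proof -
      have "(\<Sum>e\<in>F. M q e * d e) = M q u * d u + (\<Sum>e\<in>F'. M q e * d e)"
        unfolding F'_def using u insert.prems by (simp add: sum.remove)
      also have "(\<Sum>e\<in>F'. M q e * d e) = (\<Sum>e\<in>F'. M q e * d' e)"
        by (rule sum.cong) (auto simp: d_def F'_def)
      finally show ?thesis .
    qed
    have "\<forall>e. e \<notin> F \<longrightarrow> d e = 0" using d' u by (auto simp: d_def F'_def)
    moreover have "\<exists>e\<in>F. d e \<noteq> 0" using d' by (auto simp: d_def F'_def)
    moreover have "(\<Sum>e\<in>F. M r e * d e) = 0" using sumF[of r] u by (simp add: d_def S_def)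
    moreover have "(\<Sum>e\<in>F. M q e * d e) = 0" if q: "q \<in> R" for q
    proof -
      have "0 = (\<Sum>e\<in>F'. M' q e * d' e)" using d' q by simp
      also have "\<dots> = (\<Sum>e\<in>F'. M q e * d' e) - M q u / M r u * S"
        by (simp add: M'_def S_def algebra_simps sum_subtractf sum_distrib_left)
      finally have "(\<Sum>e\<in>F'. M q e * d' e) = M q u / M r u * S" by simp
      then show ?thesis using sumF[of q] by (simp add: d_def)
    qed
    ultimately show ?thesis by (intro exI[of _ d]) auto
  qed
qed

lemma handshake:
  fixes tl hd :: "'e \<Rightarrow> 'v"
  assumes "finite F" "\<forall>e\<in>F. tl e \<noteq> hd e" "N = tl ` F \<union> hd ` F"
  shows "(\<Sum>n\<in>N. card {e\<in>F. tl e = n \<or> hd e = n}) = 2 * card F"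
proof -
  have fN: "finite N" using assms by simp
  have "(\<Sum>n\<in>N. card {e\<in>F. tl e = n \<or> hd e = n})
      = (\<Sum>n\<in>N. \<Sum>e\<in>F. (if tl e = n \<or> hd e = n then 1 else 0::nat))"
    by (rule sum.cong) (auto simp: sum.inter_filter[symmetric] assms(1))
  also have "\<dots> = (\<Sum>e\<in>F. \<Sum>n\<in>N. (if tl e = n \<or> hd e = n then 1 else 0::nat))"
    by (rule sum.swap)
  also have "\<dots> = (\<Sum>e\<in>F. 2)"
  proof (rule sum.cong)
    fix e assume e: "e \<in> F"
    have "(\<Sum>n\<in>N. (if tl e = n \<or> hd e = n then 1 else 0::nat)) = card {n\<in>N. tl e = n \<or> hd e = n}"
      using fN by (simp add: sum.inter_filter[symmetric])
    also have "{n\<in>N. tl e = n \<or> hd e = n} = {tl e, hd e}" using e assms(3) by auto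
    finally show "(\<Sum>n\<in>N. (if tl e = n \<or> hd e = n then 1 else 0::nat)) = 2" using e assms(2) by simp
  qed simp
  finally show ?thesis by simp
qed

lemma direction:
  fixes tl hd :: "'e \<Rightarrow> 'v" and x :: "'e \<Rightarrow> real"
  defines "M \<equiv> \<lambda>n e. (if tl e = n then 1 else 0) - (if hd e = n then (1::real) else 0)"
  assumes fin: "finite A" and thd: "\<forall>e\<in>A. tl e \<noteq> hd e"
    and rhsI: "\<forall>n\<in>C. rhs n \<in> \<int>"
    and cons: "\<forall>n\<in>C. (\<Sum>e\<in>A. M n e * x e) = rhs n"
    and Fdef: "F = {e\<in>A. x e \<notin> \<int>}" and Fne: "F \<noteq> {}"
  shows "\<exists>d. (\<forall>e. e \<notin> F \<longrightarrow> d e = 0) \<and> (\<exists>e\<in>F. d e \<noteq> 0) \<and>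
             (\<forall>n\<in>C. (\<Sum>e\<in>A. M n e * d e) = 0)"
proof -
  define N where "N = tl ` F \<union> hd ` F"
  define inc where "inc n = {e\<in>F. tl e = n \<or> hd e = n}" for n
  have FA: "F \<subseteq> A" using Fdef by auto
  have fF: "finite F" using fin FA finite_subset by blast
  have fN: "finite N" using fF by (simp add: N_def)
  have thdF: "\<forall>e\<in>F. tl e \<noteq> hd e" using thd FA by blast
  have hs: "(\<Sum>n\<in>N. card (inc n)) = 2 * card F"
    unfolding inc_def by (rule handshake[OF fF thdF N_def])
  have Mint: "M n e \<in> \<int>" for n e by (simp add: M_def)
  have M0: "M n e = 0" if "tl e \<noteq> n" "hd e \<noteq> n" for n e using that by (simp add: M_def)
  have deg2: "card (inc n) \<ge> 2" if n: "n \<in> N" "n \<in> C" for n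
  proof (rule ccontr)
    assume "\<not> 2 \<le> card (inc n)"
    moreover have "inc n \<noteq> {}" using n by (auto simp: N_def inc_def)
    moreover have "finite (inc n)" using fF by (simp add: inc_def)
    ultimately have "card (inc n) = 1" by (metis One_nat_def Suc_1 card_0_eq not_less_eq_eq le_antisym Suc_leI neq0_conv)
    then obtain e0 where e0: "inc n = {e0}" by (rule card_1_singletonE)
    have e0F: "e0 \<in> F" and e0n: "tl e0 = n \<or> hd e0 = n" using e0 by (auto simp: inc_def)
    have "(\<Sum>e\<in>A. M n e * x e) = (\<Sum>e\<in>F. M n e * x e) + (\<Sum>e\<in>A - F. M n e * x e)"
      using fin FA by (metis add.commute sum.subset_diff)
    moreover have "(\<Sum>e\<in>A - F. M n e * x e) \<in> \<int>"
      using Fdef Mint by (intro Ints_sum Ints_mult) auto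
    moreover have "(\<Sum>e\<in>F. M n e * x e) = M n e0 * x e0"
    proof -
      have "(\<Sum>e\<in>F. M n e * x e) = M n e0 * x e0 + (\<Sum>e\<in>F - {e0}. M n e * x e)"
        using fF e0F by (simp add: sum.remove)
      moreover have "(\<Sum>e\<in>F - {e0}. M n e * x e) = 0"
      proof (rule sum.neutral, rule ballI)
        fix e assume "e \<in> F - {e0}"
        then have "e \<notin> inc n" using e0 by auto
        then have "tl e \<noteq> n" "hd e \<noteq> n" using \<open>e \<in> F - {e0}\<close> by (auto simp: inc_def)
        then show "M n e * x e = 0" using M0 by simp
      qed
      ultimately show ?thesis by simp
    qed
    ultimately have "M n e0 * x e0 \<in> \<int>" using cons rhsI n
      by (metis Ints_diff add_diff_cancel_right')
    moreover have "M n e0 = 1 \<or> M n e0 = -1" using e0n thdF e0F by (auto simp: M_def)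
    ultimately have "x e0 \<in> \<int>" by (metis Ints_minus minus_minus mult_1 mult_minus_left)
    then show False using e0F Fdef by auto
  qed
  have rowsum: "(\<Sum>m\<in>N. \<Sum>e\<in>F. M m e * d e) = 0" for d :: "'e \<Rightarrow> real"
  proof -
    have "(\<Sum>m\<in>N. \<Sum>e\<in>F. M m e * d e) = (\<Sum>e\<in>F. \<Sum>m\<in>N. M m e * d e)" by (rule sum.swap)
    also have "\<dots> = (\<Sum>e\<in>F. 0)"
    proof (rule sum.cong)
      fix e assume e: "e \<in> F"
      have "(\<Sum>m\<in>N. M m e * d e) = d e * ((\<Sum>m\<in>N. if tl e = m then 1 else 0) - (\<Sum>m\<in>N. if hd e = m then 1 else 0))"
        by (simp add: M_def sum_subtractf sum_distrib_left algebra_simps sum_distrib_right)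
      also have "\<dots> = 0" using e fN by (simp add: N_def)
      finally show "(\<Sum>m\<in>N. M m e * d e) = 0" .
    qed simp
    finally show ?thesis by simp
  qed
  obtain R where R: "R \<subseteq> N" "card R < card F" "\<And>n. n \<in> N \<Longrightarrow> n \<in> C \<Longrightarrow> n \<notin> R \<Longrightarrow> N \<subseteq> C \<and> R = N - {n}"
  proof (cases "N \<subseteq> C")
    case True
    obtain r0 where r0: "r0 \<in> N" using Fne by (auto simp: N_def)
    have "2 * card N \<le> (\<Sum>n\<in>N. card (inc n))"
      using deg2 True sum_mono[of N "\<lambda>_. 2" "\<lambda>n. card (inc n)"] by (auto simp: mult.commute)
    then have "card N \<le> card F" using hs by simp
    then have "card (N - {r0}) < card F" using r0 fN
      by (metis card_Diff1_less order_less_le_trans)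
    then show ?thesis using that[of "N - {r0}"] True by auto
  next
    case False
    then obtain w where w: "w \<in> N" "w \<notin> C" by auto
    have "inc w \<noteq> {}" using w by (auto simp: N_def inc_def)
    then have cw: "card (inc w) \<ge> 1" using fF by (simp add: inc_def card_gt_0_iff Suc_le_eq)
    have "(\<Sum>n\<in>N. card (inc n)) = (\<Sum>n\<in>N \<inter> C. card (inc n)) + (\<Sum>n\<in>N - C. card (inc n))"
      using fN by (metis Diff_Compl Int_commute sum.Int_Diff)
    moreover have "(\<Sum>n\<in>N - C. card (inc n)) \<ge> card (inc w)"
      using w fN by (intro member_le_sum) auto
    moreover have "(\<Sum>n\<in>N \<inter> C. card (inc n)) \<ge> 2 * card (N \<inter> C)"
      using deg2 sum_mono[of "N \<inter> C" "\<lambda>_. 2" "\<lambda>n. card (inc n)"] by (auto simp: mult.commute)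
    ultimately have "card (N \<inter> C) < card F" using hs cw by linarith
    then show ?thesis using that[of "N \<inter> C"] by auto
  qed
  have fR: "finite R" using R(1) fN finite_subset by blast
  obtain d where d: "\<forall>e. e \<notin> F \<longrightarrow> d e = 0" "\<exists>e\<in>F. d e \<noteq> 0"
    "\<forall>r\<in>R. (\<Sum>e\<in>F. M r e * d e) = 0"
    using kernel_exists[OF fR fF R(2), of M] by blast
  have AF: "(\<Sum>e\<in>A. M n e * d e) = (\<Sum>e\<in>F. M n e * d e)" for n
    using fin FA d(1) by (intro sum.mono_neutral_right) auto
  have "(\<Sum>e\<in>A. M n e * d e) = 0" if n: "n \<in> C" for n
  proof (cases "n \<in> N")
    case False
    then have "\<forall>e\<in>F. M n e * d e = 0" using M0 by (metis N_def UnI1 UnI2 imageI mult_zero_left)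
    then show ?thesis using AF by (simp add: sum.neutral)
  next
    case True
    show ?thesis
    proof (cases "n \<in> R")
      case True then show ?thesis using AF d(3) by simp
    next
      case False
      then have NR: "R = N - {n}" using R(3) \<open>n \<in> N\<close> n by blast
      have "(\<Sum>m\<in>N. \<Sum>e\<in>F. M m e * d e) = (\<Sum>e\<in>F. M n e * d e) + (\<Sum>m\<in>N - {n}. \<Sum>e\<in>F. M m e * d e)"
        using fN \<open>n \<in> N\<close> by (simp add: sum.remove)
      moreover have "(\<Sum>m\<in>N - {n}. \<Sum>e\<in>F. M m e * d e) = 0" using d(3) NR by simp
      ultimately show ?thesis using rowsum[of d] AF by simp
    qed
  qed
  then show ?thesis using d(1,2) by blast
qed

lemma frac_bounds:
  assumes "x \<notin> \<int>"
  shows "of_int \<lfloor>x\<rfloor> < x" "x < of_int \<lfloor>x\<rfloor> + 1"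
proof -
  have "of_int \<lfloor>x\<rfloor> \<noteq> x" using assms by (metis Ints_of_int)
  then show "of_int \<lfloor>x\<rfloor> < x" by (simp add: order_le_neq_trans)
  show "x < of_int \<lfloor>x\<rfloor> + 1" by linarith
qed

lemma step_exists:
  fixes x \<sigma> :: "'e \<Rightarrow> real"
  assumes "finite P" "P \<noteq> {}" "\<forall>e\<in>P. \<sigma> e \<noteq> 0 \<and> x e \<notin> \<int>"
  shows "\<exists>s>0. (\<forall>e\<in>P. of_int \<lfloor>x e\<rfloor> \<le> x e + s * \<sigma> e \<and> x e + s * \<sigma> e \<le> of_int \<lfloor>x e\<rfloor> + 1)
              \<and> (\<exists>e\<in>P. x e + s * \<sigma> e \<in> \<int>)"
proof -
  define \<tau> where "\<tau> e = (if \<sigma> e > 0 then (of_int \<lfloor>x e\<rfloor> + 1 - x e) / \<sigma> e else (of_int \<lfloor>x e\<rfloor> - x e) / \<sigma> e)" for e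
  have tpos: "\<tau> e > 0" if "e \<in> P" for e
  proof -
    have "x e \<notin> \<int>" "\<sigma> e \<noteq> 0" using assms that by auto
    then show ?thesis using frac_bounds[of "x e"] unfolding \<tau>_def
      by (auto simp: divide_pos_pos divide_neg_neg linorder_neq_iff)
  qed
  define s where "s = Min (\<tau> ` P)"
  have sin: "s \<in> \<tau> ` P" unfolding s_def using assms by (intro Min_in) auto
  then obtain e0 where e0: "e0 \<in> P" "s = \<tau> e0" by auto
  have sle: "s \<le> \<tau> e" if "e \<in> P" for e unfolding s_def using assms that by (intro Min_le) auto
  have spos: "s > 0" using e0 tpos by simp
  have "of_int \<lfloor>x e\<rfloor> \<le> x e + s * \<sigma> e \<and> x e + s * \<sigma> e \<le> of_int \<lfloor>x e\<rfloor> + 1" if e: "e \<in> P" for e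
  proof -
    have ne: "\<sigma> e \<noteq> 0" "x e \<notin> \<int>" using assms e by auto
    note fb = frac_bounds[OF ne(2)]
    show ?thesis
    proof (cases "\<sigma> e > 0")
      case True
      have "s * \<sigma> e \<le> \<tau> e * \<sigma> e" using sle[OF e] True by (simp add: mult_right_mono)
      also have "\<tau> e * \<sigma> e = of_int \<lfloor>x e\<rfloor> + 1 - x e" using True by (simp add: \<tau>_def)
      finally show ?thesis using fb spos True by (smt (verit) mult_pos_pos)
    next
      case False
      then have neg: "\<sigma> e < 0" using ne by simp
      have "\<tau> e * \<sigma> e \<le> s * \<sigma> e" using sle[OF e] neg by (simp add: mult_right_mono_neg)
      moreover have "\<tau> e * \<sigma> e = of_int \<lfloor>x e\<rfloor> - x e" using neg by (simp add: \<tau>_def)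
      ultimately show ?thesis using fb spos neg by (smt (verit) mult_pos_neg)
    qed
  qed
  moreover have "x e0 + s * \<sigma> e0 \<in> \<int>"
  proof -
    have "\<sigma> e0 \<noteq> 0" using assms e0 by auto
    then have "x e0 + s * \<sigma> e0 = (if \<sigma> e0 > 0 then of_int \<lfloor>x e0\<rfloor> + 1 else of_int \<lfloor>x e0\<rfloor>)"
      using e0 by (simp add: \<tau>_def)
    then show ?thesis by simp
  qed
  ultimately show ?thesis using spos e0 by blast
qed

definition caff :: "(real \<Rightarrow> real) \<Rightarrow> bool" where
  "caff h \<longleftrightarrow> (\<forall>k::int. \<exists>a b. \<forall>y. of_int k \<le> y \<and> y \<le> of_int k + 1 \<longrightarrow> h y = a * y + b)"

lemma rounding:
  fixes tl hd :: "'e \<Rightarrow> 'v" and lo hi :: "'e \<Rightarrow> real" and rhs :: "'v \<Rightarrow> real"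
    and g :: "'e \<Rightarrow> real \<Rightarrow> real" and x :: "'e \<Rightarrow> real"
  defines "M \<equiv> \<lambda>n e. (if tl e = n then 1 else 0) - (if hd e = n then (1::real) else 0)"
  assumes fin: "finite A" and thd: "\<forall>e\<in>A. tl e \<noteq> hd e"
    and lohi: "\<forall>e\<in>A. lo e \<in> \<int> \<and> hi e \<in> \<int>"
    and rhsI: "\<forall>n\<in>C. rhs n \<in> \<int>" and gc: "\<forall>e\<in>A. caff (g e)"
    and bx: "\<forall>e\<in>A. lo e \<le> x e \<and> x e \<le> hi e"
    and cx: "\<forall>n\<in>C. (\<Sum>e\<in>A. M n e * x e) = rhs n"
  shows "\<exists>x'. (\<forall>e\<in>A. lo e \<le> x' e \<and> x' e \<le> hi e) \<and> (\<forall>n\<in>C. (\<Sum>e\<in>A. M n e * x' e) = rhs n)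
           \<and> (\<forall>e\<in>A. x' e \<in> \<int>) \<and> (\<Sum>e\<in>A. g e (x' e)) \<le> (\<Sum>e\<in>A. g e (x e))"
  using bx cx
proof (induction "card {e\<in>A. x e \<notin> \<int>}" arbitrary: x rule: less_induct)
  case less
  define F where "F = {e\<in>A. x e \<notin> \<int>}"
  show ?case
  proof (cases "F = {}")
    case True
    then show ?thesis using less.prems by (intro exI[of _ x]) (auto simp: F_def)
  next
    case False
    obtain d where d: "\<forall>e. e \<notin> F \<longrightarrow> d e = 0" "\<exists>e\<in>F. d e \<noteq> 0"
      "\<forall>n\<in>C. (\<Sum>e\<in>A. M n e * d e) = 0"
      using direction[OF fin thd rhsI _ F_def False] less.prems(2) unfolding M_def by blast
    define P where "P = {e\<in>F. d e \<noteq> 0}"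
    have fF: "finite F" using fin by (simp add: F_def)
    have fP: "finite P" using fF by (simp add: P_def)
    have Pne: "P \<noteq> {}" using d(2) by (auto simp: P_def)
    have Pc: "\<forall>e\<in>P. d e \<noteq> 0 \<and> x e \<notin> \<int>" by (auto simp: P_def F_def)
    have Pc2: "\<forall>e\<in>P. (- d) e \<noteq> 0 \<and> x e \<notin> \<int>" using Pc by auto
    obtain s1 where s1: "s1 > 0" "\<forall>e\<in>P. of_int \<lfloor>x e\<rfloor> \<le> x e + s1 * d e \<and> x e + s1 * d e \<le> of_int \<lfloor>x e\<rfloor> + 1"
      "\<exists>e\<in>P. x e + s1 * d e \<in> \<int>" using step_exists[OF fP Pne Pc] by blast
    obtain s2 where s2: "s2 > 0" "\<forall>e\<in>P. of_int \<lfloor>x e\<rfloor> \<le> x e + s2 * (- d) e \<and> x e + s2 * (- d) e \<le> of_int \<lfloor>x e\<rfloor> + 1"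
      "\<exists>e\<in>P. x e + s2 * (- d) e \<in> \<int>" using step_exists[OF fP Pne Pc2] by blast
    have dz: "d e = 0" if "e \<notin> P" for e using that d(1) by (auto simp: P_def)
    have PF: "P \<subseteq> F" by (auto simp: P_def)
        have cell: "of_int \<lfloor>x e\<rfloor> \<le> x e + s * d e \<and> x e + s * d e \<le> of_int \<lfloor>x e\<rfloor> + 1"
      if "s = s1 \<or> s = - s2" for s e
    proof (cases "e \<in> P")
      case True then show ?thesis using that s1(2) s2(2) by auto
    next
      case False then show ?thesis using dz[of e] by simp
    qed
    obtain a b where ab: "\<forall>e\<in>A. \<forall>y. of_int \<lfloor>x e\<rfloor> \<le> y \<and> y \<le> of_int \<lfloor>x e\<rfloor> + 1 \<longrightarrow> g e y = a e * y + b e"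
    proof -
      have "\<forall>e\<in>A. \<exists>a b. \<forall>y. of_int \<lfloor>x e\<rfloor> \<le> y \<and> y \<le> of_int \<lfloor>x e\<rfloor> + 1 \<longrightarrow> g e y = a * y + b"
        using gc by (auto simp: caff_def)
      then have "\<exists>a. \<forall>e\<in>A. \<exists>b. \<forall>y. of_int \<lfloor>x e\<rfloor> \<le> y \<and> y \<le> of_int \<lfloor>x e\<rfloor> + 1 \<longrightarrow> g e y = a e * y + b"
        by (rule bchoice)
      then obtain a where "\<forall>e\<in>A. \<exists>b. \<forall>y. of_int \<lfloor>x e\<rfloor> \<le> y \<and> y \<le> of_int \<lfloor>x e\<rfloor> + 1 \<longrightarrow> g e y = a e * y + b" by blast
      then have "\<exists>b. \<forall>e\<in>A. \<forall>y. of_int \<lfloor>x e\<rfloor> \<le> y \<and> y \<le> of_int \<lfloor>x e\<rfloor> + 1 \<longrightarrow> g e y = a e * y + b e"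
        by (rule bchoice)
      then show ?thesis using that by blast
    qed
    define L where "L = (\<Sum>e\<in>A. a e * d e)"
    have costs: "(\<Sum>e\<in>A. g e (x e + s * d e)) = (\<Sum>e\<in>A. g e (x e)) + s * L"
      if "s = s1 \<or> s = - s2" for s
    proof -
      have "(\<Sum>e\<in>A. g e (x e + s * d e)) = (\<Sum>e\<in>A. g e (x e) + s * (a e * d e))"
      proof (rule sum.cong)
        fix e assume e: "e \<in> A"
        have c0: "of_int \<lfloor>x e\<rfloor> \<le> x e \<and> x e \<le> of_int \<lfloor>x e\<rfloor> + 1" by linarith
        show "g e (x e + s * d e) = g e (x e) + s * (a e * d e)"
          using ab e cell[OF that, of e] c0 by (simp add: algebra_simps)
      qed simp
      then show ?thesis by (simp add: L_def sum.distrib sum_distrib_left)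
    qed
    have feas: "(\<forall>e\<in>A. lo e \<le> x e + s * d e \<and> x e + s * d e \<le> hi e) \<and>
                (\<forall>n\<in>C. (\<Sum>e\<in>A. M n e * (x e + s * d e)) = rhs n)"
      if "s = s1 \<or> s = - s2" for s
    proof (rule conjI[OF ballI ballI])
      fix e assume e: "e \<in> A"
      show "lo e \<le> x e + s * d e \<and> x e + s * d e \<le> hi e"
      proof (cases "e \<in> F")
        case False
        then have "d e = 0" using dz[of e] PF by blast
        then show ?thesis using less.prems(1) e by auto
      next
        case True
        then have nI: "x e \<notin> \<int>" by (simp add: F_def)
        have "lo e \<le> of_int \<lfloor>x e\<rfloor>"
        proof -
          obtain k where k: "lo e = of_int k" using lohi e Ints_cases by metis
          have "of_int k \<le> x e" using less.prems(1) e k by metis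
          then have "k \<le> \<lfloor>x e\<rfloor>" by (simp add: le_floor_iff)
          then show ?thesis using k by simp
        qed
        moreover have "of_int \<lfloor>x e\<rfloor> + 1 \<le> hi e"
        proof -
          obtain k where k: "hi e = of_int k" using lohi e Ints_cases by metis
          have "x e \<le> of_int k" using less.prems(1) e k by metis
          then have "x e < of_int k" using nI by (metis Ints_of_int order_le_neq_trans)
          then have "\<lfloor>x e\<rfloor> < k" by (simp add: floor_less_iff)
          then show ?thesis using k by simp
        qed
        ultimately show ?thesis using cell[OF that, of e] by linarith
      qed
    next
      fix n assume n: "n \<in> C"
      have "(\<Sum>e\<in>A. M n e * (x e + s * d e)) = (\<Sum>e\<in>A. M n e * x e) + s * (\<Sum>e\<in>A. M n e * d e)"
        by (simp add: algebra_simps sum.distrib sum_distrib_left)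
      then show "(\<Sum>e\<in>A. M n e * (x e + s * d e)) = rhs n" using n less.prems(2) d(3) by simp
    qed
    have less_card: "card {e\<in>A. x e + s * d e \<notin> \<int>} < card {e\<in>A. x e \<notin> \<int>}"
      if ss: "s = s1 \<or> s = - s2" for s
    proof -
      have sub: "{e\<in>A. x e + s * d e \<notin> \<int>} \<subseteq> F"
      proof
        fix e assume e: "e \<in> {e\<in>A. x e + s * d e \<notin> \<int>}"
        show "e \<in> F"
        proof (rule ccontr)
          assume "e \<notin> F"
          then have "d e = 0" "x e \<in> \<int>" using dz PF e by (auto simp: F_def)
          then show False using e by simp
        qed
      qed
      obtain e1 where e1: "e1 \<in> P" "x e1 + s * d e1 \<in> \<int>" using ss s1(3) s2(3) by auto
      have "e1 \<in> F" "e1 \<notin> {e\<in>A. x e + s * d e \<notin> \<int>}" using e1 PF by auto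
      then have "{e\<in>A. x e + s * d e \<notin> \<int>} \<subset> F" using sub by blast
      then show ?thesis using fF by (simp add: F_def[symmetric] psubset_card_mono)
    qed
    obtain s where s: "s = s1 \<or> s = - s2" "s * L \<le> 0"
    proof (cases "L \<le> 0")
      case True then show ?thesis using that[of s1] s1(1) by (simp add: mult_nonneg_nonpos)
    next
      case False then show ?thesis using that[of "- s2"] s2(1) by simp
    qed
    define x1 where "x1 = (\<lambda>e. x e + s * d e)"
    obtain x' where x': "(\<forall>e\<in>A. lo e \<le> x' e \<and> x' e \<le> hi e)" "(\<forall>n\<in>C. (\<Sum>e\<in>A. M n e * x' e) = rhs n)"
       "(\<forall>e\<in>A. x' e \<in> \<int>)" "(\<Sum>e\<in>A. g e (x' e)) \<le> (\<Sum>e\<in>A. g e (x1 e))"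
      using less.hyps[of x1] less_card[OF s(1)] feas[OF s(1)] unfolding x1_def by blast
    moreover have "(\<Sum>e\<in>A. g e (x1 e)) \<le> (\<Sum>e\<in>A. g e (x e))"
      using costs[OF s(1)] s(2) by (simp add: x1_def)
    ultimately show ?thesis by (intro exI[of _ x']) auto
  qed
qed

lemma caff_add: "caff f \<Longrightarrow> caff g \<Longrightarrow> caff (\<lambda>y. f y + g y)"
  unfolding caff_def
proof (intro allI)
  fix k :: int
  assume f: "\<forall>k::int. \<exists>a b. \<forall>y. of_int k \<le> y \<and> y \<le> of_int k + 1 \<longrightarrow> f y = a * y + b"
     and g: "\<forall>k::int. \<exists>a b. \<forall>y. of_int k \<le> y \<and> y \<le> of_int k + 1 \<longrightarrow> g y = a * y + b"
  obtain a1 b1 where 1: "\<forall>y. of_int k \<le> y \<and> y \<le> of_int k + 1 \<longrightarrow> f y = a1 * y + b1" using f by blast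
  obtain a2 b2 where 2: "\<forall>y. of_int k \<le> y \<and> y \<le> of_int k + 1 \<longrightarrow> g y = a2 * y + b2" using g by blast
  show "\<exists>a b. \<forall>y. of_int k \<le> y \<and> y \<le> of_int k + 1 \<longrightarrow> f y + g y = a * y + b"
    using 1 2 by (intro exI[of _ "a1 + a2"] exI[of _ "b1 + b2"]) (auto simp: algebra_simps)
qed

lemma caff_scale: "caff f \<Longrightarrow> caff (\<lambda>y. c * f y)"
  unfolding caff_def
proof (intro allI)
  fix k :: int
  assume f: "\<forall>k::int. \<exists>a b. \<forall>y. of_int k \<le> y \<and> y \<le> of_int k + 1 \<longrightarrow> f y = a * y + b"
  obtain a1 b1 where 1: "\<forall>y. of_int k \<le> y \<and> y \<le> of_int k + 1 \<longrightarrow> f y = a1 * y + b1" using f by blast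
  show "\<exists>a b. \<forall>y. of_int k \<le> y \<and> y \<le> of_int k + 1 \<longrightarrow> c * f y = a * y + b"
    using 1 by (intro exI[of _ "c * a1"] exI[of _ "c * b1"]) (auto simp: algebra_simps)
qed

lemma caff_diff: "caff f \<Longrightarrow> caff g \<Longrightarrow> caff (\<lambda>y. f y - g y)"
proof -
  assume "caff f" "caff g"
  then have "caff (\<lambda>y. f y + (-1) * g y)" by (intro caff_add caff_scale)
  then show ?thesis by simp
qed

lemma caff_sum: "\<forall>m\<in>S. caff (f m) \<Longrightarrow> caff (\<lambda>y. \<Sum>m\<in>S. f m y)"
  unfolding caff_def
proof (intro allI)
  fix k :: int
  assume "\<forall>m\<in>S. \<forall>k::int. \<exists>a b. \<forall>y. of_int k \<le> y \<and> y \<le> of_int k + 1 \<longrightarrow> f m y = a * y + b"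
  then have "\<forall>m\<in>S. \<exists>a b. \<forall>y. of_int k \<le> y \<and> y \<le> of_int k + 1 \<longrightarrow> f m y = a * y + b" by blast
  then have "\<exists>a. \<forall>m\<in>S. \<exists>b. \<forall>y. of_int k \<le> y \<and> y \<le> of_int k + 1 \<longrightarrow> f m y = a m * y + b" by (rule bchoice)
  then obtain a where "\<forall>m\<in>S. \<exists>b. \<forall>y. of_int k \<le> y \<and> y \<le> of_int k + 1 \<longrightarrow> f m y = a m * y + b" by blast
  then have "\<exists>b. \<forall>m\<in>S. \<forall>y. of_int k \<le> y \<and> y \<le> of_int k + 1 \<longrightarrow> f m y = a m * y + b m" by (rule bchoice)
  then obtain b where ab: "\<forall>m\<in>S. \<forall>y. of_int k \<le> y \<and> y \<le> of_int k + 1 \<longrightarrow> f m y = a m * y + b m" by blast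
  have "\<forall>y. of_int k \<le> y \<and> y \<le> of_int k + 1 \<longrightarrow> (\<Sum>m\<in>S. f m y) = (\<Sum>m\<in>S. a m) * y + (\<Sum>m\<in>S. b m)"
  proof (intro allI impI)
    fix y :: real assume y: "of_int k \<le> y \<and> y \<le> of_int k + 1"
    have "(\<Sum>m\<in>S. f m y) = (\<Sum>m\<in>S. a m * y + b m)" using ab y by (intro sum.cong) auto
    then show "(\<Sum>m\<in>S. f m y) = (\<Sum>m\<in>S. a m) * y + (\<Sum>m\<in>S. b m)"
      by (simp add: sum.distrib sum_distrib_right)
  qed
  then show "\<exists>a b. \<forall>y. of_int k \<le> y \<and> y \<le> of_int k + 1 \<longrightarrow> (\<Sum>m\<in>S. f m y) = a * y + b" by blast
qed

lemma caff_abs: "caff (\<lambda>y. \<bar>y\<bar>)"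
  unfolding caff_def
proof
  fix k :: int
  show "\<exists>a b. \<forall>y::real. of_int k \<le> y \<and> y \<le> of_int k + 1 \<longrightarrow> \<bar>y\<bar> = a * y + b"
  proof (cases "k \<ge> 0")
    case True
    then have "\<forall>y::real. of_int k \<le> y \<and> y \<le> of_int k + 1 \<longrightarrow> \<bar>y\<bar> = 1 * y + 0" by auto
    then show ?thesis by blast
  next
    case False then have "k \<le> -1" by simp
    then have "of_int k + 1 \<le> (0::real)" by linarith
    then have "\<forall>y::real. of_int k \<le> y \<and> y \<le> of_int k + 1 \<longrightarrow> \<bar>y\<bar> = (-1) * y + 0" by auto
    then show ?thesis by blast
  qed
qed

lemma clamp_cell: "\<exists>a b. \<forall>u::real. of_int j \<le> u \<and> u \<le> of_int j + 1 \<longrightarrow> max 0 (min 1 u) = a * u + b"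
proof (cases "j \<ge> 1")
  case True then have "(1::real) \<le> of_int j" by simp
  then have "\<forall>u::real. of_int j \<le> u \<and> u \<le> of_int j + 1 \<longrightarrow> max 0 (min 1 u) = 0 * u + 1" by auto
  then show ?thesis by blast
next
  case False
  show ?thesis
  proof (cases "j = 0")
    case True
    then have "\<forall>u::real. of_int j \<le> u \<and> u \<le> of_int j + 1 \<longrightarrow> max 0 (min 1 u) = 1 * u + 0" by auto
    then show ?thesis by blast
  next
    case False
    then have "j \<le> -1" using \<open>\<not> j \<ge> 1\<close> by simp
    then have "of_int j + 1 \<le> (0::real)" by linarith
    then have "\<forall>u::real. of_int j \<le> u \<and> u \<le> of_int j + 1 \<longrightarrow> max 0 (min 1 u) = 0 * u + 0" by auto
    then show ?thesis by blast
  qed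
qed

lemma caff_clamp_lin:
  assumes "c \<in> \<int>" "s = 1 \<or> s = -1"
  shows "caff (\<lambda>y. max 0 (min 1 (s * y + c)))"
  unfolding caff_def
proof
  fix k :: int
  obtain m where c: "c = of_int m" using assms(1) Ints_cases by blast
  show "\<exists>a b. \<forall>y. of_int k \<le> y \<and> y \<le> of_int k + 1 \<longrightarrow> max 0 (min 1 (s * y + c)) = a * y + b"
    using assms(2)
  proof
    assume s: "s = 1"
    obtain a b where ab: "\<forall>u::real. of_int (k + m) \<le> u \<and> u \<le> of_int (k + m) + 1 \<longrightarrow> max 0 (min 1 u) = a * u + b"
      using clamp_cell by blast
    have "\<forall>y. of_int k \<le> y \<and> y \<le> of_int k + 1 \<longrightarrow> max 0 (min 1 (s * y + c)) = a * y + (a * c + b)"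
    proof (intro allI impI)
      fix y :: real assume "of_int k \<le> y \<and> y \<le> of_int k + 1"
      then have "of_int (k + m) \<le> y + c \<and> y + c \<le> of_int (k + m) + 1" using c by simp
      then show "max 0 (min 1 (s * y + c)) = a * y + (a * c + b)" using ab s by (simp add: algebra_simps)
    qed
    then show ?thesis by blast
  next
    assume s: "s = -1"
    obtain a b where ab: "\<forall>u::real. of_int (m - k - 1) \<le> u \<and> u \<le> of_int (m - k - 1) + 1 \<longrightarrow> max 0 (min 1 u) = a * u + b"
      using clamp_cell by blast
    have "\<forall>y. of_int k \<le> y \<and> y \<le> of_int k + 1 \<longrightarrow> max 0 (min 1 (s * y + c)) = (- a) * y + (a * c + b)"
    proof (intro allI impI)
      fix y :: real assume "of_int k \<le> y \<and> y \<le> of_int k + 1"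
      then have "of_int (m - k - 1) \<le> c - y \<and> c - y \<le> of_int (m - k - 1) + 1" using c by simp
      then show "max 0 (min 1 (s * y + c)) = (- a) * y + (a * c + b)" using ab s by (simp add: algebra_simps)
    qed
    then show ?thesis by blast
  qed
qed



lemma caff_const: "caff (\<lambda>y. c)"
  unfolding caff_def by (metis mult_zero_left add_0)

lemma caff_Vpl_neg: "caff (\<lambda>y. Vpl ybar th (- y))"
proof -
  have eq: "(\<lambda>y. Vpl ybar th (- y)) = (\<lambda>y. (\<Sum>m\<in>{0..<int ybar}. th m * max 0 (min 1 ((-1) * y + of_int (- m))))
        - (\<Sum>m\<in>{- int ybar..<0}. th m * max 0 (min 1 (1 * y + of_int (m + 1)))))"
    by (rule ext) (simp add: Vpl_def algebra_simps)
  show ?thesis unfolding eq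
    by (intro caff_diff caff_sum ballI caff_scale caff_clamp_lin) auto
qed

lemma M_sum:
  fixes tl hd :: "'e \<Rightarrow> 'v" and x :: "'e \<Rightarrow> real"
  assumes "finite A"
  shows "(\<Sum>e\<in>A. ((if tl e = n then 1 else 0) - (if hd e = n then 1 else (0::real))) * x e)
       = (\<Sum>e\<in>{e\<in>A. tl e = n}. x e) - (\<Sum>e\<in>{e\<in>A. hd e = n}. x e)"
proof -
  have "(\<Sum>e\<in>A. ((if tl e = n then 1 else 0) - (if hd e = n then 1 else (0::real))) * x e)
      = (\<Sum>e\<in>A. (if tl e = n then x e else 0) - (if hd e = n then x e else 0))"
    by (rule sum.cong) auto
  then show ?thesis using assms by (simp add: sum.inter_filter sum_subtractf)
qed

theorem proposition3:
  fixes NRV NSV :: "'n set" and E :: "('n \<times> 'n) set" and V :: "'v set"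
    and T bbar ybar :: nat
    and c :: "nat \<Rightarrow> 'n \<Rightarrow> 'n \<Rightarrow> real" and r :: "nat \<Rightarrow> 'n \<Rightarrow> real"
    and th0 thmax :: real and th :: "nat \<Rightarrow> 'n \<Rightarrow> int \<Rightarrow> real"
    and z0 b0 :: "'n \<Rightarrow> 'n \<Rightarrow> real"
    and zs :: "nat \<Rightarrow> 'n \<Rightarrow> 'n \<Rightarrow> real"
  assumes "finite NRV" and "E \<subseteq> NRV \<times> NRV" and "finite V"
    and "\<forall>t\<in>{1..T}. \<forall>i\<in>NSV \<inter> NRV. r t i \<ge> 0"
    and "thmax > 0" and "in_Theta NRV NSV T ybar thmax th"
    and "\<forall>(i,j)\<in>E. z0 i j \<in> \<int> \<and> b0 i j \<in> \<int>"
    and "(\<Sum>(i,j)\<in>E. z0 i j) = real (card V)"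
    and "\<forall>t\<in>{0..T}. \<forall>(i,j)\<in>E. zs t i j \<in> \<int>"
    and "\<exists>b yp ym. fs_constraints NRV NSV E T bbar ybar z0 b0 zs b yp ym
                  \<and> by_integral NRV NSV E T b yp ym"
  shows "\<exists>b yp ym. fs_constraints NRV NSV E T bbar ybar z0 b0 zs b yp ym
                  \<and> by_integral NRV NSV E T b yp ym
                  \<and> (\<forall>b' yp' ym'. fs_constraints NRV NSV E T bbar ybar z0 b0 zs b' yp' ym' \<longrightarrow>
                       fs_objective NRV NSV E T ybar c r th0 th zs yp ym
                         \<le> fs_objective NRV NSV E T ybar c r th0 th zs yp' ym')"
proof -
  note finNRV = assms(1) and EN = assms(2) and rnn = assms(4) and ib0 = assms(7)
    and izs = assms(9) and feas0 = assms(10)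
  define S where "S = NSV \<inter> NRV"
  have finE: "finite E" using finNRV EN by (meson finite_SigmaI finite_subset)
  have finS: "finite S" using finNRV by (simp add: S_def)
  define A :: "((nat \<times> ('n \<times> 'n)) + (nat \<times> 'n)) set"
    where "A = Inl ` ({1..T} \<times> E) \<union> Inr ` ({1..T} \<times> S)"
  define tl :: "((nat \<times> ('n \<times> 'n)) + (nat \<times> 'n)) \<Rightarrow> (nat \<times> 'n) option"
    where "tl = case_sum (\<lambda>(t,(i,j)). Some (t,i)) (\<lambda>(t,i). None)"
  define hd :: "((nat \<times> ('n \<times> 'n)) + (nat \<times> 'n)) \<Rightarrow> (nat \<times> 'n) option"
    where "hd = case_sum (\<lambda>(t,(i,j)). if t < T then Some (t+1, j) else None) (\<lambda>(t,i). Some (t,i))"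
  define C where "C = Some ` ({1..T} \<times> NRV)"
  define rhs :: "(nat \<times> 'n) option \<Rightarrow> real"
    where "rhs n = (case n of None \<Rightarrow> 0 | Some (t,i) \<Rightarrow> if t = 1 then (\<Sum>(j,i')\<in>{e\<in>E. snd e = i}. b0 j i') else 0)" for n
  define lo :: "((nat \<times> ('n \<times> 'n)) + (nat \<times> 'n)) \<Rightarrow> real"
    where "lo = case_sum (\<lambda>_. 0) (\<lambda>_. - real ybar)"
  define hi :: "((nat \<times> ('n \<times> 'n)) + (nat \<times> 'n)) \<Rightarrow> real"
    where "hi = case_sum (\<lambda>(t,(i,j)). real bbar * zs t i j) (\<lambda>_. real ybar)"
  define g :: "((nat \<times> ('n \<times> 'n)) + (nat \<times> 'n)) \<Rightarrow> real \<Rightarrow> real"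
    where "g = case_sum (\<lambda>_ _. 0) (\<lambda>(t,i) d. r t i * \<bar>d\<bar> + Vpl ybar (th t i) (- d))"
  define M where "M = (\<lambda>n e. (if tl e = n then 1 else 0) - (if hd e = n then 1 else (0::real)))"
  have finA: "finite A" using finE finS by (simp add: A_def)
  have thd: "\<forall>e\<in>A. tl e \<noteq> hd e" by (auto simp: A_def tl_def hd_def split: if_splits)
  have lohi: "\<forall>e\<in>A. lo e \<in> \<int> \<and> hi e \<in> \<int>"
  proof
    fix e assume "e \<in> A"
    then show "lo e \<in> \<int> \<and> hi e \<in> \<int>"
    proof (auto simp: A_def lo_def hi_def)
      fix t i j assume "(i,j) \<in> E" "Suc 0 \<le> t" "t \<le> T"
      then have "zs t i j \<in> \<int>" using izs by fastforce
      then show "real bbar * zs t i j \<in> \<int>" by (intro Ints_mult) auto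
    qed
  qed
  have rhsI: "\<forall>n\<in>C. rhs n \<in> \<int>"
    using ib0 by (auto simp: C_def rhs_def intro!: Ints_sum)
  have gc: "\<forall>e\<in>A. caff (g e)"
    by (auto simp: A_def g_def caff_const intro!: caff_add caff_scale caff_abs caff_Vpl_neg)
  have tlset: "{e\<in>A. tl e = Some (t,i)} = (\<lambda>q. Inl (t,q)) ` {q\<in>E. fst q = i}" if "t \<in> {1..T}" for t i
    using that by (auto simp: A_def tl_def)
  have hdset: "{e\<in>A. hd e = Some (t,i)} = (\<lambda>q. Inl (t-1,q)) ` {q\<in>E. snd q = i \<and> 2 \<le> t} \<union> Inr ` {p. p = (t,i) \<and> i \<in> S}"
    if "t \<in> {1..T}" for t i
    using that by (auto simp: A_def hd_def image_iff split: if_splits)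
  have cons_eq: "(\<Sum>e\<in>A. M (Some (t,i)) e * x e) = (\<Sum>q\<in>{q\<in>E. fst q = i}. x (Inl (t,q)))
      - (\<Sum>q\<in>{q\<in>E. snd q = i \<and> 2 \<le> t}. x (Inl (t-1,q))) - (if i \<in> S then x (Inr (t,i)) else 0)"
    if t: "t \<in> {1..T}" for t i and x :: "((nat \<times> ('n \<times> 'n)) + (nat \<times> 'n)) \<Rightarrow> real"
  proof -
    have "(\<Sum>e\<in>A. M (Some (t,i)) e * x e) = (\<Sum>e\<in>{e\<in>A. tl e = Some (t,i)}. x e) - (\<Sum>e\<in>{e\<in>A. hd e = Some (t,i)}. x e)"
      unfolding M_def by (rule M_sum[OF finA])
    also have "(\<Sum>e\<in>{e\<in>A. tl e = Some (t,i)}. x e) = (\<Sum>q\<in>{q\<in>E. fst q = i}. x (Inl (t,q)))"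
      unfolding tlset[OF t] by (subst sum.reindex) (auto simp: inj_on_def)
    also have "(\<Sum>e\<in>{e\<in>A. hd e = Some (t,i)}. x e) = (\<Sum>q\<in>{q\<in>E. snd q = i \<and> 2 \<le> t}. x (Inl (t-1,q)))
        + (if i \<in> S then x (Inr (t,i)) else 0)"
    proof -
      have f1: "finite ((\<lambda>q. Inl (t-1,q)) ` {q\<in>E. snd q = i \<and> 2 \<le> t} :: ((nat \<times> ('n \<times> 'n)) + (nat \<times> 'n)) set)"
        using finE by simp
      have f2: "finite (Inr ` {p. p = (t,i) \<and> i \<in> S} :: ((nat \<times> ('n \<times> 'n)) + (nat \<times> 'n)) set)"
        by (rule finite_imageI) (rule finite_subset[of _ "{(t,i)}"], auto)
      have "(\<Sum>e\<in>{e\<in>A. hd e = Some (t,i)}. x e) = (\<Sum>e\<in>(\<lambda>q. Inl (t-1,q)) ` {q\<in>E. snd q = i \<and> 2 \<le> t}. x e)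
          + (\<Sum>e\<in>Inr ` {p. p = (t,i) \<and> i \<in> S}. x e)"
        unfolding hdset[OF t] by (rule sum.union_disjoint[OF f1 f2]) auto
      also have "(\<Sum>e\<in>(\<lambda>q. Inl (t-1,q)) ` {q\<in>E. snd q = i \<and> 2 \<le> t}. x e) = (\<Sum>q\<in>{q\<in>E. snd q = i \<and> 2 \<le> t}. x (Inl (t-1,q)))"
        by (subst sum.reindex) (auto simp: inj_on_def)
      also have "(\<Sum>e\<in>Inr ` {p. p = (t,i) \<and> i \<in> S}. x e) = (if i \<in> S then x (Inr (t,i)) else 0)"
        by (cases "i \<in> S") auto
      finally show ?thesis .
    qed
    finally show ?thesis by simp
  qed
  have yv: "yval NRV NSV yp t i - yval NRV NSV ym t i = (if i \<in> S then yp t i - ym t i else 0)" for yp ym t i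
    by (simp add: yval_def S_def)
  define enc :: "(nat \<Rightarrow> 'n \<Rightarrow> 'n \<Rightarrow> real) \<Rightarrow> (nat \<Rightarrow> 'n \<Rightarrow> real) \<Rightarrow> (nat \<Rightarrow> 'n \<Rightarrow> real) \<Rightarrow> ((nat \<times> ('n \<times> 'n)) + (nat \<times> 'n)) \<Rightarrow> real"
    where "enc b yp ym = case_sum (\<lambda>(t,(i,j)). b t i j) (\<lambda>(t,i). yp t i - ym t i)" for b yp ym
  have enc_ok: "(\<forall>e\<in>A. lo e \<le> enc b yp ym e \<and> enc b yp ym e \<le> hi e) \<and>
                (\<forall>n\<in>C. (\<Sum>e\<in>A. M n e * enc b yp ym e) = rhs n)"
    if fs: "fs_constraints NRV NSV E T bbar ybar z0 b0 zs b yp ym" for b yp ym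
  proof
    note fsd = fs[unfolded fs_constraints_def]
    show "\<forall>e\<in>A. lo e \<le> enc b yp ym e \<and> enc b yp ym e \<le> hi e"
    proof
      fix e assume "e \<in> A"
      then show "lo e \<le> enc b yp ym e \<and> enc b yp ym e \<le> hi e"
      proof (auto simp: A_def)
        fix t i j assume "(i,j) \<in> E" "Suc 0 \<le> t" "t \<le> T"
        then show "lo (Inl (t,i,j)) \<le> enc b yp ym (Inl (t,i,j))" "enc b yp ym (Inl (t,i,j)) \<le> hi (Inl (t,i,j))"
          using fsd by (fastforce simp: lo_def hi_def enc_def)+
      next
        fix t i assume "i \<in> S" "Suc 0 \<le> t" "t \<le> T"
        then have "0 \<le> yp t i \<and> yp t i \<le> real ybar \<and> 0 \<le> ym t i \<and> ym t i \<le> real ybar"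
          using fsd by (auto simp: S_def)
        then show "lo (Inr (t,i)) \<le> enc b yp ym (Inr (t,i))" "enc b yp ym (Inr (t,i)) \<le> hi (Inr (t,i))"
          by (auto simp: lo_def hi_def enc_def)
      qed
    qed
    show "\<forall>n\<in>C. (\<Sum>e\<in>A. M n e * enc b yp ym e) = rhs n"
    proof
      fix n assume "n \<in> C"
      then obtain t i where n: "n = Some (t,i)" and t: "t \<in> {1..T}" and i: "i \<in> NRV" by (auto simp: C_def)
      have fl: "(\<Sum>(i',j)\<in>{e\<in>E. fst e = i}. b t i' j)
          = (\<Sum>(j,i')\<in>{e\<in>E. snd e = i}. b (t - 1) j i') + (if i \<in> S then yp t i - ym t i else 0)"
        using fsd t i yv by auto
      have e1: "(\<Sum>q\<in>{q\<in>E. fst q = i}. enc b yp ym (Inl (t,q))) = (\<Sum>(i',j)\<in>{e\<in>E. fst e = i}. b t i' j)"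
        by (rule sum.cong) (auto simp: enc_def)
      have e3: "(if i \<in> S then enc b yp ym (Inr (t,i)) else 0) = (if i \<in> S then yp t i - ym t i else 0)"
        by (simp add: enc_def)
      show "(\<Sum>e\<in>A. M n e * enc b yp ym e) = rhs n"
      proof (cases "t = 1")
        case True
        have "{q\<in>E. snd q = i \<and> 2 \<le> t} = {}" using True by auto
        moreover have "(\<Sum>(j,i')\<in>{e\<in>E. snd e = i}. b (t - 1) j i') = (\<Sum>(j,i')\<in>{e\<in>E. snd e = i}. b0 j i')"
          using True fsd by (intro sum.cong) auto
        ultimately show ?thesis using cons_eq[OF t] e1 e3 fl n True by (simp add: rhs_def)
      next
        case False
        then have "{q\<in>E. snd q = i \<and> 2 \<le> t} = {q\<in>E. snd q = i}" using t by auto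
        moreover have "(\<Sum>q\<in>{q\<in>E. snd q = i}. enc b yp ym (Inl (t-1,q))) = (\<Sum>(j,i')\<in>{e\<in>E. snd e = i}. b (t - 1) j i')"
          by (rule sum.cong) (auto simp: enc_def)
        ultimately show ?thesis using cons_eq[OF t] e1 e3 fl n False by (simp add: rhs_def)
      qed
    qed
  qed
  obtain bI ypI ymI where fsI: "fs_constraints NRV NSV E T bbar ybar z0 b0 zs bI ypI ymI" using feas0 by blast
  note fsId = fsI[unfolded fs_constraints_def]
  have zcons: "\<forall>t\<in>{1..T}. \<forall>i\<in>NRV. (\<Sum>(i',j)\<in>{e\<in>E. fst e = i}. zs t i' j) = (\<Sum>(j,i')\<in>{e\<in>E. snd e = i}. zs (t - 1) j i')"
    using fsId by blast
  have zs0: "\<forall>(i,j)\<in>E. zs 0 i j = z0 i j" using fsId by blast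
  have b0bd: "\<forall>(i,j)\<in>E. 0 \<le> b0 i j \<and> b0 i j \<le> real bbar * zs 0 i j"
  proof -
    have "\<forall>(i,j)\<in>E. 0 \<le> bI 0 i j \<and> bI 0 i j \<le> real bbar * zs 0 i j" using fsId by auto
    moreover have "\<forall>(i,j)\<in>E. bI 0 i j = b0 i j" using fsId by blast
    ultimately show ?thesis by fastforce
  qed
  define decb :: "(((nat \<times> ('n \<times> 'n)) + (nat \<times> 'n)) \<Rightarrow> real) \<Rightarrow> nat \<Rightarrow> 'n \<Rightarrow> 'n \<Rightarrow> real"
    where "decb x t i j = (if 1 \<le> t \<and> t \<le> T then x (Inl (t,(i,j))) else b0 i j)" for x t i j
  define decp :: "(((nat \<times> ('n \<times> 'n)) + (nat \<times> 'n)) \<Rightarrow> real) \<Rightarrow> nat \<Rightarrow> 'n \<Rightarrow> real"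
    where "decp x t i = max 0 (x (Inr (t,i)))" for x t i
  define decm :: "(((nat \<times> ('n \<times> 'n)) + (nat \<times> 'n)) \<Rightarrow> real) \<Rightarrow> nat \<Rightarrow> 'n \<Rightarrow> real"
    where "decm x t i = max 0 (- x (Inr (t,i)))" for x t i
  have dec_ok: "fs_constraints NRV NSV E T bbar ybar z0 b0 zs (decb x) (decp x) (decm x) \<and>
                by_integral NRV NSV E T (decb x) (decp x) (decm x)"
    if xb: "\<forall>e\<in>A. lo e \<le> x e \<and> x e \<le> hi e" and xc: "\<forall>n\<in>C. (\<Sum>e\<in>A. M n e * x e) = rhs n"
      and xi: "\<forall>e\<in>A. x e \<in> \<int>" for x
  proof -
    have inl: "Inl (t,(i,j)) \<in> A" if "t \<in> {1..T}" "(i,j) \<in> E" for t i j using that by (auto simp: A_def)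
    have inr: "Inr (t,i) \<in> A" if "t \<in> {1..T}" "i \<in> S" for t i using that by (auto simp: A_def)
    have c1: "\<forall>t\<in>{1..T}. \<forall>i\<in>NRV.
        (\<Sum>(i',j)\<in>{e\<in>E. fst e = i}. decb x t i' j)
          = (\<Sum>(j,i')\<in>{e\<in>E. snd e = i}. decb x (t - 1) j i')
            + yval NRV NSV (decp x) t i - yval NRV NSV (decm x) t i"
    proof (intro ballI)
      fix t i assume t: "t \<in> {1..T}" and i: "i \<in> NRV"
      have cs: "(\<Sum>e\<in>A. M (Some (t,i)) e * x e) = rhs (Some (t,i))" using xc t i by (auto simp: C_def)
      have yy: "yval NRV NSV (decp x) t i - yval NRV NSV (decm x) t i = (if i \<in> S then x (Inr (t,i)) else 0)"
        by (simp add: yv decp_def decm_def max_def)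
      have e1: "(\<Sum>(i',j)\<in>{e\<in>E. fst e = i}. decb x t i' j) = (\<Sum>q\<in>{q\<in>E. fst q = i}. x (Inl (t,q)))"
        using t by (intro sum.cong) (auto simp: decb_def)
      show "(\<Sum>(i',j)\<in>{e\<in>E. fst e = i}. decb x t i' j)
          = (\<Sum>(j,i')\<in>{e\<in>E. snd e = i}. decb x (t - 1) j i')
            + yval NRV NSV (decp x) t i - yval NRV NSV (decm x) t i"
      proof (cases "t = 1")
        case True
        have "{q\<in>E. snd q = i \<and> 2 \<le> t} = {}" using True by auto
        moreover have "(\<Sum>(j,i')\<in>{e\<in>E. snd e = i}. decb x (t - 1) j i') = (\<Sum>(j,i')\<in>{e\<in>E. snd e = i}. b0 j i')"
          using True by (intro sum.cong) (auto simp: decb_def)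
        ultimately show ?thesis using cons_eq[OF t, of i x] cs e1 yy True by (simp add: rhs_def)
      next
        case False
        then have "{q\<in>E. snd q = i \<and> 2 \<le> t} = {q\<in>E. snd q = i}" using t by auto
        moreover have "(\<Sum>(j,i')\<in>{e\<in>E. snd e = i}. decb x (t - 1) j i') = (\<Sum>q\<in>{q\<in>E. snd q = i}. x (Inl (t-1,q)))"
          using t False by (intro sum.cong) (auto simp: decb_def)
        ultimately show ?thesis using cons_eq[OF t, of i x] cs e1 yy False by (simp add: rhs_def)
      qed
    qed
    have c3: "\<forall>t\<in>{0..T}. \<forall>(i,j)\<in>E. 0 \<le> decb x t i j \<and> decb x t i j \<le> real bbar * zs t i j"
    proof (intro ballI, clarify)
      fix t i j assume t: "t \<in> {0..T}" and ij: "(i,j) \<in> E"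
      show "0 \<le> decb x t i j \<and> decb x t i j \<le> real bbar * zs t i j"
      proof (cases "t = 0")
        case True then show ?thesis using b0bd ij by (auto simp: decb_def)
      next
        case False
        then have t1: "t \<in> {1..T}" using t by auto
        then show ?thesis using xb inl[OF t1 ij] by (auto simp: decb_def lo_def hi_def)
      qed
    qed
    have c4: "\<forall>(i,j)\<in>E. decb x 0 i j = b0 i j \<and> zs 0 i j = z0 i j" using zs0 by (auto simp: decb_def)
    have c5: "\<forall>t\<in>{1..T}. \<forall>i\<in>NSV \<inter> NRV.
        0 \<le> decp x t i \<and> decp x t i \<le> real ybar \<and> 0 \<le> decm x t i \<and> decm x t i \<le> real ybar"
    proof (intro ballI)
      fix t i assume t: "t \<in> {1..T}" and i: "i \<in> NSV \<inter> NRV"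
      then have "lo (Inr (t,i)) \<le> x (Inr (t,i)) \<and> x (Inr (t,i)) \<le> hi (Inr (t,i))"
        using xb inr[OF t] by (auto simp: S_def)
      then show "0 \<le> decp x t i \<and> decp x t i \<le> real ybar \<and> 0 \<le> decm x t i \<and> decm x t i \<le> real ybar"
        by (auto simp: decp_def decm_def lo_def hi_def)
    qed
    have fs: "fs_constraints NRV NSV E T bbar ybar z0 b0 zs (decb x) (decp x) (decm x)"
      unfolding fs_constraints_def using c1 zcons c3 c4 c5 by blast
    have i1: "\<forall>t\<in>{0..T}. \<forall>(i,j)\<in>E. decb x t i j \<in> \<int>"
    proof (intro ballI, clarify)
      fix t i j assume t: "t \<in> {0..T}" and ij: "(i,j) \<in> E"
      show "decb x t i j \<in> \<int>"
      proof (cases "t = 0")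
        case True then show ?thesis using ib0 ij by (auto simp: decb_def)
      next
        case False
        then have t1: "t \<in> {1..T}" using t by auto
        then show ?thesis using xi inl[OF t1 ij] by (auto simp: decb_def)
      qed
    qed
    have i2: "\<forall>t\<in>{1..T}. \<forall>i\<in>NSV \<inter> NRV. decp x t i \<in> \<int> \<and> decm x t i \<in> \<int>"
    proof (intro ballI)
      fix t i assume t: "t \<in> {1..T}" and i: "i \<in> NSV \<inter> NRV"
      then have "x (Inr (t,i)) \<in> \<int>" using xi inr[OF t] by (auto simp: S_def)
      then show "decp x t i \<in> \<int> \<and> decm x t i \<in> \<int>"
        by (auto simp: decp_def decm_def max_def)
    qed
    show ?thesis using fs i1 i2 by (simp add: by_integral_def)
  qed
  define K where "K = (\<Sum>t\<in>{1..T}. \<Sum>(i,j)\<in>E. c t i j * zs t i j) + th0"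
  have obj_eq: "fs_objective NRV NSV E T ybar c r th0 th zs yp ym = K +
      (\<Sum>t\<in>{1..T}. \<Sum>i\<in>S. r t i * (yp t i + ym t i) + Vpl ybar (th t i) (ym t i - yp t i))" for yp ym
    unfolding fs_objective_def K_def S_def by (simp add: sum.distrib)
  have gsum: "(\<Sum>e\<in>A. g e (x e)) = (\<Sum>t\<in>{1..T}. \<Sum>i\<in>S. r t i * \<bar>x (Inr (t,i))\<bar> + Vpl ybar (th t i) (- x (Inr (t,i))))" for x
  proof -
    have "(\<Sum>e\<in>A. g e (x e)) = (\<Sum>e\<in>Inl ` ({1..T} \<times> E). g e (x e)) + (\<Sum>e\<in>Inr ` ({1..T} \<times> S). g e (x e))"
      unfolding A_def using finE finS by (intro sum.union_disjoint) auto
    also have "(\<Sum>e\<in>Inl ` ({1..T} \<times> E). g e (x e)) = 0" by (intro sum.neutral) (auto simp: g_def)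
    also have "(\<Sum>e\<in>Inr ` ({1..T} \<times> S). g e (x e)) = (\<Sum>p\<in>{1..T} \<times> S. g (Inr p) (x (Inr p)))"
      by (subst sum.reindex) auto
    also have "\<dots> = (\<Sum>t\<in>{1..T}. \<Sum>i\<in>S. g (Inr (t,i)) (x (Inr (t,i))))"
      unfolding sum.cartesian_product by (rule sum.cong) auto
    finally show ?thesis by (simp add: g_def)
  qed
  have obj_dec: "fs_objective NRV NSV E T ybar c r th0 th zs (decp x) (decm x) = K + (\<Sum>e\<in>A. g e (x e))" for x
  proof -
    have "\<And>t i. decp x t i + decm x t i = \<bar>x (Inr (t,i))\<bar>" "\<And>t i. decm x t i - decp x t i = - x (Inr (t,i))"
      by (auto simp: decp_def decm_def max_def)
    then show ?thesis by (simp add: obj_eq gsum)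
  qed
  have obj_enc: "K + (\<Sum>e\<in>A. g e (enc b yp ym e)) \<le> fs_objective NRV NSV E T ybar c r th0 th zs yp ym"
    if fs: "fs_constraints NRV NSV E T bbar ybar z0 b0 zs b yp ym" for b yp ym
  proof -
    have "(\<Sum>t\<in>{1..T}. \<Sum>i\<in>S. r t i * \<bar>enc b yp ym (Inr (t,i))\<bar> + Vpl ybar (th t i) (- enc b yp ym (Inr (t,i))))
       \<le> (\<Sum>t\<in>{1..T}. \<Sum>i\<in>S. r t i * (yp t i + ym t i) + Vpl ybar (th t i) (ym t i - yp t i))"
    proof (intro sum_mono)
      fix t i assume t: "t \<in> {1..T}" and i: "i \<in> S"
      have b: "0 \<le> yp t i" "0 \<le> ym t i" using fs t i by (auto simp: fs_constraints_def S_def)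
      have r0: "0 \<le> r t i" using rnn t i by (auto simp: S_def)
      have "\<bar>yp t i - ym t i\<bar> \<le> yp t i + ym t i" using b by linarith
      then have "r t i * \<bar>yp t i - ym t i\<bar> \<le> r t i * (yp t i + ym t i)" using r0 by (rule mult_left_mono)
      then show "r t i * \<bar>enc b yp ym (Inr (t,i))\<bar> + Vpl ybar (th t i) (- enc b yp ym (Inr (t,i)))
          \<le> r t i * (yp t i + ym t i) + Vpl ybar (th t i) (ym t i - yp t i)"
        by (simp add: enc_def)
    qed
    then show ?thesis by (simp add: obj_eq gsum)
  qed
  define Vals where "Vals = {fs_objective NRV NSV E T ybar c r th0 th zs yp ym | b yp ym.
      fs_constraints NRV NSV E T bbar ybar z0 b0 zs b yp ym \<and> by_integral NRV NSV E T b yp ym}"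
  define \<Phi> where "\<Phi> f = K + (\<Sum>t\<in>{1..T}. \<Sum>i\<in>S. r t i * (fst (f (t,i)) + snd (f (t,i))) + Vpl ybar (th t i) (snd (f (t,i)) - fst (f (t,i))))"
    for f :: "nat \<times> 'n \<Rightarrow> real \<times> real"
  define Z where "Z = real ` {0..ybar}"
  have inZ: "y \<in> Z" if "y \<in> \<int>" "0 \<le> y" "y \<le> real ybar" for y
  proof -
    from that(1) obtain k :: int where k: "y = of_int k" by (rule Ints_cases)
    have k0: "0 \<le> k" using that(2) k by simp
    have "of_int k \<le> (of_int (int ybar) :: real)" using that(3) k by simp
    then have k1: "k \<le> int ybar" by (simp only: of_int_le_iff)
    have "y = real (nat k)" using k0 k by simp
    moreover have "nat k \<in> {0..ybar}" using k1 by simp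
    ultimately show ?thesis unfolding Z_def by blast
  qed
  have ValsSub: "Vals \<subseteq> \<Phi> ` PiE ({1..T} \<times> S) (\<lambda>_. Z \<times> Z)"
  proof
    fix v assume "v \<in> Vals"
    then obtain b yp ym where v: "v = fs_objective NRV NSV E T ybar c r th0 th zs yp ym"
      and fs: "fs_constraints NRV NSV E T bbar ybar z0 b0 zs b yp ym" and bi: "by_integral NRV NSV E T b yp ym"
      by (auto simp: Vals_def)
    define f :: "nat \<times> 'n \<Rightarrow> real \<times> real" where "f = restrict (\<lambda>(t,i). (yp t i, ym t i)) ({1..T} \<times> S)"
    have "f \<in> PiE ({1..T} \<times> S) (\<lambda>_. Z \<times> Z)"
    proof -
      have "(yp t i, ym t i) \<in> Z \<times> Z" if "t \<in> {1..T}" "i \<in> S" for t i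
        using fs bi that inZ by (auto simp: fs_constraints_def by_integral_def S_def)
      then show ?thesis unfolding f_def by (subst restrict_PiE_iff) auto
    qed
    moreover have "\<Phi> f = v"
      unfolding v obj_eq \<Phi>_def
      by (intro arg_cong2[where f="(+)"] refl sum.cong) (auto simp: f_def)
    ultimately show "v \<in> \<Phi> ` PiE ({1..T} \<times> S) (\<lambda>_. Z \<times> Z)" by blast
  qed
  have finZ: "finite Z" by (simp add: Z_def)
  have finP: "finite (PiE ({1..T} \<times> S) (\<lambda>_. Z \<times> Z))"
    by (rule finite_PiE) (use finS finZ in auto)
  have finVals: "finite Vals"
    by (rule finite_subset[OF ValsSub]) (use finP in simp)
  have neVals: "Vals \<noteq> {}" using feas0 by (auto simp: Vals_def)
  have "Min Vals \<in> Vals" using finVals neVals by (rule Min_in)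
  then obtain bS ypS ymS where S1: "fs_constraints NRV NSV E T bbar ybar z0 b0 zs bS ypS ymS"
    and S2: "by_integral NRV NSV E T bS ypS ymS"
    and S3: "fs_objective NRV NSV E T ybar c r th0 th zs ypS ymS = Min Vals"
    by (auto simp: Vals_def)
  have "fs_objective NRV NSV E T ybar c r th0 th zs ypS ymS \<le> fs_objective NRV NSV E T ybar c r th0 th zs yp' ym'"
    if fs': "fs_constraints NRV NSV E T bbar ybar z0 b0 zs b' yp' ym'" for b' yp' ym'
  proof -
    define x where "x = enc b' yp' ym'"
    have xf: "(\<forall>e\<in>A. lo e \<le> x e \<and> x e \<le> hi e)" "(\<forall>n\<in>C. (\<Sum>e\<in>A. M n e * x e) = rhs n)"
      using enc_ok[OF fs'] by (auto simp: x_def)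
    obtain x' where x': "\<forall>e\<in>A. lo e \<le> x' e \<and> x' e \<le> hi e" "\<forall>n\<in>C. (\<Sum>e\<in>A. M n e * x' e) = rhs n"
      "\<forall>e\<in>A. x' e \<in> \<int>" "(\<Sum>e\<in>A. g e (x' e)) \<le> (\<Sum>e\<in>A. g e (x e))"
      using rounding[OF finA thd lohi rhsI gc xf(1) xf(2)[unfolded M_def]] unfolding M_def by blast
    have "fs_objective NRV NSV E T ybar c r th0 th zs (decp x') (decm x') \<in> Vals"
      using dec_ok[OF x'(1-3)] by (auto simp: Vals_def)
    then have "Min Vals \<le> fs_objective NRV NSV E T ybar c r th0 th zs (decp x') (decm x')"
      using finVals Min_le by blast
    also have "\<dots> = K + (\<Sum>e\<in>A. g e (x' e))" by (rule obj_dec)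
    also have "\<dots> \<le> K + (\<Sum>e\<in>A. g e (x e))" using x'(4) by simp
    also have "\<dots> \<le> fs_objective NRV NSV E T ybar c r th0 th zs yp' ym'" unfolding x_def by (rule obj_enc[OF fs'])
    finally show ?thesis using S3 by simp
  qed
  then show ?thesis using S1 S2 by blast
qed

end
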